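(* Let $a_{12},d>0$ and consider the rectangle with vertices $A_1'=(-a_{12}/2,\,d)$, $A_2'=(a_{12}/2,\,d)$, $A_4=(-a_{12}/2,\,0)$, $A_3=(a_{12}/2,\,0)$; let $M_{12}=(0,d)$, $M_{34}=(0,0)$. Let $F$ be the intersection of the diagonals $A_1'A_3$, $A_2'A_4$ and $\theta=\angle A_1'FA_2'$, and assume $\theta<90^\circ$. Let $F_{12}$ be the orthocenter of triangle $A_1'FA_2'$, $F_{34}$ the orthocenter of triangle $A_4FA_3$, $w(\theta)=2\sin\frac{\theta}{2}$, and $O_{12},O_{34}$ the points on segment $M_{12}M_{34}$ with $\angle A_1'O_{12}A_2'=\angle A_4O_{34}A_3=120^\circ$. Then $$2|A_1'F_{12}|+2|A_3F_{34}|+w(\theta)|F_{12}F_{34}|=4a_{12}\cos\frac{\theta}{2}$$ and $$2|A_1'O_{12}|+2|A_3O_{34}|+|O_{12}O_{34}|=a_{12}\left(\sqrt{3}+\frac{\cos\frac{\theta}{2}}{\sin\frac{\theta}{2}}\right).$$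
   Context: $|XY|$ denotes Euclidean distance. This is the case $a_{34}=a_{12}$ of an isosceles trapezium with parallel sides $A_1'A_2'$ (length $a_{12}$) and $A_4A_3$ (length $a_{34}$) at distance $d$. *)

theory Defs
  imports "HOL-Analysis.Analysis"
begin

definition vangle :: "real \<times> real \<Rightarrow> real \<times> real \<Rightarrow> real" where
  "vangle u v = (if u = 0 \<or> v = 0 then pi / 2 else arccos (inner u v / (norm u * norm v)))"

definition angle :: "real \<times> real \<Rightarrow> real \<times> real \<Rightarrow> real \<times> real \<Rightarrow> real" where
  "angle a b c = vangle (a - b) (c - b)"

definition is_orthocenter :: "real \<times> real \<Rightarrow> real \<times> real \<Rightarrow> real \<times> real \<Rightarrow> real \<times> real \<Rightarrow> bool" where
  "is_orthocenter H A B C \<longleftrightarrow>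
     inner (H - A) (B - C) = 0 \<and> inner (H - B) (C - A) = 0 \<and> inner (H - C) (A - B) = 0"

end

theory Submission
  imports Defs
begin

lemma dist_pp: "dist ((x1::real), (y1::real)) (x2, y2) = sqrt ((x1 - x2)^2 + (y1 - y2)^2)"
  by (simp add: dist_Pair_Pair dist_real_def)

lemma norm_pp: "norm ((x::real), (y::real)) = sqrt (x^2 + y^2)"
  by (simp add: norm_Pair)

lemma O_pos:
  fixes a d y :: real
  assumes a: "a > 0"
    and ang: "angle (- a / 2, d) (0, y) (a / 2, d) = 2 * pi / 3"
  shows "\<bar>d - y\<bar> = a / (2 * sqrt 3)"
proof -
  define k where "k = d - y"
  have eu: "(- a / 2, d) - (0::real, y) = (- a / 2, k)" by (simp add: k_def)
  have ev: "(a / 2, d) - (0::real, y) = (a / 2, k)" by (simp add: k_def)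
  have ne: "(- a / 2, k) \<noteq> 0" using a by (simp add: zero_prod_def)
  have ne2: "(a / 2, k) \<noteq> 0" using a by (simp add: zero_prod_def)
  have nn: "norm (- a / 2, k) = sqrt (a^2/4 + k^2)"
    by (simp add: norm_pp power2_eq_square)
  have nn2: "norm (a / 2, k) = sqrt (a^2/4 + k^2)"
    by (simp add: norm_pp power2_eq_square)
  have ip: "inner (- a / 2, k) (a / 2, k) = k^2 - a^2/4"
    by (simp add: power2_eq_square)
  have pos: "a^2/4 + k^2 > 0" using a by (simp add: add_pos_nonneg)
  have sq: "sqrt (a^2/4 + k^2) * sqrt (a^2/4 + k^2) = a^2/4 + k^2"
    using pos by simp
  define x where "x = (k^2 - a^2/4) / (a^2/4 + k^2)"
  have "angle (- a / 2, d) (0, y) (a / 2, d) = arccos x"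
    unfolding angle_def vangle_def eu ev x_def using ne ne2
    by (simp only: nn nn2 ip sq if_False simp_thms)
  hence "arccos x = 2 * pi / 3" using ang by simp
  moreover have "-1 \<le> x" "x \<le> 1" using pos by (simp_all add: x_def field_simps)
  ultimately have "x = -1/2" using cos_arccos cos_120 by metis
  hence "2 * (k^2 - a^2/4) = -(a^2/4 + k^2)" using pos unfolding x_def by (simp add: field_simps)
  hence "k^2 = (a / (2 * sqrt 3))^2" by (simp add: power_divide power_mult_distrib field_simps)
  hence "\<bar>k\<bar> = a / (2 * sqrt 3)" using a by (metis abs_of_pos divide_pos_pos power2_abs power2_eq_iff_nonneg abs_ge_zero less_imp_le mult_pos_pos real_sqrt_gt_zero zero_less_numeral)
  thus ?thesis by (simp add: k_def)
qed

theorem corollary1: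
  fixes a12 d :: real
    and A1' A2' A3 A4 M12 M34 F F12 F34 O12 O34 :: "real \<times> real"
    and \<theta> :: real and w :: "real \<Rightarrow> real"
  assumes "a12 > 0" and "d > 0"
    and "A1' = (- a12 / 2, d)" and "A2' = (a12 / 2, d)"
    and "A4 = (- a12 / 2, 0)" and "A3 = (a12 / 2, 0)"
    and "M12 = (0, d)" and "M34 = (0, 0)"
    and "F \<in> closed_segment A1' A3 \<inter> closed_segment A2' A4"
    and "\<theta> = angle A1' F A2'"
    and "\<theta> < pi / 2"
    and "is_orthocenter F12 A1' F A2'"
    and "is_orthocenter F34 A4 F A3"
    and "w = (\<lambda>t. 2 * sin (t / 2))"
    and "O12 \<in> closed_segment M12 M34" and "angle A1' O12 A2' = 2 * pi / 3"
    and "O34 \<in> closed_segment M12 M34" and "angle A4 O34 A3 = 2 * pi / 3"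
  shows "(2 * dist A1' F12 + 2 * dist A3 F34 + w \<theta> * dist F12 F34 = 4 * a12 * cos (\<theta> / 2)) \<and>
         (2 * dist A1' O12 + 2 * dist A3 O34 + dist O12 O34
           = a12 * (sqrt 3 + cos (\<theta> / 2) / sin (\<theta> / 2)))"
proof -
  define a where "a = a12"
  have a: "a > 0" using assms(1) a_def by simp
  have d: "d > 0" using assms(2) .
  note A = assms(3-8)[folded a_def]
  obtain u where u: "F = (1 - u) *\<^sub>R A1' + u *\<^sub>R A3"
    using assms(9) unfolding closed_segment_def by blast
  obtain v where v: "F = (1 - v) *\<^sub>R A2' + v *\<^sub>R A4"
    using assms(9) unfolding closed_segment_def by blast
  have e1: "(1 - u) * (- a / 2) + u * (a / 2) = (1 - v) * (a / 2) + v * (- a / 2)"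
    and e2: "(1 - u) * d = (1 - v) * d"
    using u v A by (auto simp: prod_eq_iff)
  have "u = v" using e2 d by simp
  with e1 a have "u = 1/2" by (simp add: field_simps)
  hence Fe: "F = (0, d / 2)" using u A by (simp add: prod_eq_iff)
  define r where "r = sqrt (a^2 + d^2)"
  have r0: "r > 0" using a unfolding r_def by (simp add: add_pos_nonneg)
  have r2: "r^2 = a^2 + d^2" unfolding r_def by simp
  have cpos: "a^2 + d^2 > 0" using a by (simp add: add_pos_nonneg)
  define c where "c = (d^2 - a^2) / (a^2 + d^2)"
  have eu: "A1' - F = (- a / 2, d / 2)" using A Fe by simp
  have ev: "A2' - F = (a / 2, d / 2)" using A Fe by simp
  have ne: "(- a / 2, d / 2) \<noteq> 0" using a by (simp add: zero_prod_def)
  have ne2: "(a / 2, d / 2) \<noteq> 0" using a by (simp add: zero_prod_def)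
  have nn: "norm (- a / 2, d / 2) = r / 2"
    unfolding r_def norm_pp by (simp add: power_divide real_sqrt_divide add_divide_distrib[symmetric])
  have nn2: "norm (a / 2, d / 2) = r / 2"
    unfolding r_def norm_pp by (simp add: power_divide real_sqrt_divide add_divide_distrib[symmetric])
  have ip: "inner (- a / 2, d / 2) (a / 2, d / 2) = (d^2 - a^2) / 4"
    by (simp add: power2_eq_square field_simps)
  have "inner (- a / 2, d / 2) (a / 2, d / 2) / (norm (- a / 2, d / 2) * norm (a / 2, d / 2)) = c"
  proof -
    have "\<And>x. (x / 4) / (r / 2 * (r / 2)) = x / r^2" using r0 by (simp add: power2_eq_square)
    thus ?thesis unfolding ip nn nn2 c_def r2[symmetric] by blast
  qed
  hence th: "\<theta> = arccos c"
    using assms(10) ne ne2 unfolding angle_def vangle_def eu ev by simp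
  have c1: "-1 \<le> c" "c \<le> 1" using cpos a d by (simp_all add: c_def field_simps)
  have cth: "cos \<theta> = c" using th c1 by simp
  have th0: "0 \<le> \<theta>" "\<theta> \<le> pi" using th arccos_lbound arccos_ubound c1 by auto
  have "cos \<theta> > 0" using th0 assms(11) by (intro cos_gt_zero_pi) auto
  hence "c > 0" using cth by simp
  hence "d^2 - a^2 > 0" using cpos unfolding c_def by (metis divide_nonpos_pos not_le)
  hence "a^2 < d^2" by simp
  hence da: "d > a" using d by (metis power2_less_imp_less less_imp_le)
  have cos2: "cos \<theta> = 2 * (cos (\<theta>/2))^2 - 1" using cos_double_cos[of "\<theta>/2"] by simp
  have ch0: "cos (\<theta>/2) \<ge> 0" using th0 by (intro cos_ge_zero) auto
  have sh0: "sin (\<theta>/2) \<ge> 0" using th0 by (intro sin_ge_zero) auto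
  have "(cos (\<theta>/2))^2 = (1 + c) / 2" using cos2 cth by simp
  also have "\<dots> = d^2 / r^2" unfolding c_def r2 using cpos
    using d by (simp add: divide_simps)
  finally have "(cos (\<theta>/2))^2 = (d / r)^2" by (simp add: power_divide)
  hence ch: "cos (\<theta>/2) = d / r" using ch0 d r0 by (simp add: power2_eq_iff_nonneg)
  have "(sin (\<theta>/2))^2 = 1 - (d / r)^2"
    using sin_cos_squared_add[of "\<theta>/2"] ch by simp
  also have "\<dots> = a^2 / r^2" using r0 r2 d by (simp add: power_divide divide_simps)
  finally have "(sin (\<theta>/2))^2 = (a / r)^2" by (simp add: power_divide)
  hence sh: "sin (\<theta>/2) = a / r" using sh0 a r0 by (simp add: power2_eq_iff_nonneg)
  obtain x1 y1 where F12: "F12 = (x1, y1)" by fastforce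
  obtain x2 y2 where F34: "F34 = (x2, y2)" by fastforce
  have o1: "(x1 + a/2) * (- a/2) + (y1 - d) * (d/2 - d) = 0" "x1 * a = 0"
    using assms(12) unfolding is_orthocenter_def F12 A Fe by (simp_all add: algebra_simps)
  have o2: "(x2 + a/2) * (- a/2) + (y2) * (d/2) = 0" "x2 * a = 0"
    using assms(13) unfolding is_orthocenter_def F34 A Fe by (simp_all add: algebra_simps)
  have x1: "x1 = 0" and x2: "x2 = 0" using o1(2) o2(2) a by auto
  have y1: "y1 = d - a^2 / (2 * d)" using o1(1) x1 d by (simp add: field_simps power2_eq_square power4_eq_xxxx)
  have y2: "y2 = a^2 / (2 * d)" using o2(1) x2 d by (simp add: field_simps power2_eq_square power4_eq_xxxx)
  have dA1: "dist A1' F12 = a * r / (2 * d)"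
  proof -
    have "dist A1' F12 = sqrt ((a * r / (2 * d))^2)"
      unfolding A F12 dist_pp x1 y1 using d r2
      by (intro arg_cong[where f=sqrt]) (simp add: power_divide power_mult_distrib r2, simp add: field_simps power2_eq_square power4_eq_xxxx)
    thus ?thesis using a d r0 by simp
  qed
  have dA3: "dist A3 F34 = a * r / (2 * d)"
  proof -
    have "dist A3 F34 = sqrt ((a * r / (2 * d))^2)"
      unfolding A F34 dist_pp x2 y2 using d r2
      by (intro arg_cong[where f=sqrt]) (simp add: power_divide power_mult_distrib r2, simp add: field_simps power2_eq_square power4_eq_xxxx)
    thus ?thesis using a d r0 by simp
  qed
  have "a^2 / d < d" using da a d by (simp add: field_simps power2_eq_square mult_strict_mono)
  hence dFF: "dist F12 F34 = d - a^2 / d"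
    unfolding F12 F34 dist_pp x1 x2 y1 y2 by (simp add: field_simps)
  have part1: "2 * dist A1' F12 + 2 * dist A3 F34 + w \<theta> * dist F12 F34 = 4 * a12 * cos (\<theta> / 2)"
  proof -
    have "2 * (a * r / (2 * d)) + 2 * (a * r / (2 * d)) + 2 * (a / r) * (d - a^2 / d)
        = (2 * a * r^2 + 2 * a * (d^2 - a^2)) / (r * d)"
      using r0 d by (simp add: field_simps power2_eq_square)
    also have "\<dots> = 4 * a * (d / r)" unfolding r2 using r0 d
      by (simp add: field_simps power2_eq_square)
    finally show ?thesis unfolding dA1 dA3 dFF assms(14) ch sh a_def[symmetric] by simp
  qed
  obtain p where p01: "0 \<le> p" "p \<le> 1" and p: "O12 = (1 - p) *\<^sub>R M12 + p *\<^sub>R M34"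
    using assms(15) unfolding closed_segment_def by blast
  obtain q where q01: "0 \<le> q" "q \<le> 1" and q: "O34 = (1 - q) *\<^sub>R M12 + q *\<^sub>R M34"
    using assms(17) unfolding closed_segment_def by blast
  define s where "s = a / (2 * sqrt 3)"
  have O12e: "O12 = (0, (1 - p) * d)" using p A by simp
  have O34e: "O34 = (0, (1 - q) * d)" using q A by simp
  have "angle (- a / 2, d) (0, (1 - p) * d) (a / 2, d) = 2 * pi / 3"
    using assms(16) A O12e by simp
  hence hp: "\<bar>d - (1 - p) * d\<bar> = s" unfolding s_def by (rule O_pos[OF a])
  have "angle (- a / 2, 0) (0, (1 - q) * d) (a / 2, 0) = 2 * pi / 3"
    using assms(18) A O34e by simp
  hence hq: "\<bar>0 - (1 - q) * d\<bar> = s" unfolding s_def by (rule O_pos[OF a])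
  have s3: "s^2 = a^2 / 12" unfolding s_def by (simp add: power_divide power_mult_distrib)
  have s0: "s > 0" unfolding s_def using a by simp
  have "1 < sqrt (3::real)" by simp
  hence "2 * s < a" unfolding s_def using a by (simp add: field_simps)
  have dO1: "dist A1' O12 = a / sqrt 3"
  proof -
    have "dist A1' O12 = sqrt ((a / sqrt 3)^2)"
      unfolding A O12e dist_pp
    proof (intro arg_cong[where f=sqrt])
      have "(d - (1 - p) * d)^2 = s^2" using hp by (metis power2_abs)
      thus "(- a / 2 - 0)\<^sup>2 + (d - (1 - p) * d)\<^sup>2 = (a / sqrt 3)\<^sup>2"
        using s3 by (simp add: power_divide field_simps)
    qed
    thus ?thesis using a by simp
  qed
  have dO3: "dist A3 O34 = a / sqrt 3"
  proof -
    have "dist A3 O34 = sqrt ((a / sqrt 3)^2)"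
      unfolding A O34e dist_pp
    proof (intro arg_cong[where f=sqrt])
      have "(0 - (1 - q) * d)^2 = s^2" using hq by (metis power2_abs)
      thus "(a / 2 - 0)\<^sup>2 + (0 - (1 - q) * d)\<^sup>2 = (a / sqrt 3)\<^sup>2"
        using s3 by (simp add: power_divide field_simps)
    qed
    thus ?thesis using a by simp
  qed
  have "dist O12 O34 = \<bar>(1 - p) * d - (1 - q) * d\<bar>"
    unfolding O12e O34e dist_pp by simp
  also have "\<dots> = d - 2 * s"
  proof -
    have "(1 - p) * d \<le> d" using p01 d by (simp add: mult_le_cancel_right1)
    hence e1: "(1 - p) * d = d - s" using hp by simp
    have "(1 - q) * d \<ge> 0" using q01 d by simp
    hence e2: "(1 - q) * d = s" using hq by simp
    show ?thesis unfolding e1 e2 using \<open>2 * s < a\<close> da by simp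
  qed
  finally have dOO: "dist O12 O34 = d - 2 * s" .
  have part2: "2 * dist A1' O12 + 2 * dist A3 O34 + dist O12 O34
           = a12 * (sqrt 3 + cos (\<theta> / 2) / sin (\<theta> / 2))"
    unfolding dO1 dO3 dOO ch sh a_def[symmetric] s_def using a r0
    by (simp add: field_simps)
  show ?thesis using part1 part2 by simp
qed

end
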